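(* For every ranking profile $R$ over $m$ candidates, the ranking chosen by the Flow-adjusting Borda rule is pair-priceable for $R$. This holds for any choice of maximum flow in each round (the minimization of the cost-per-utility ratio is not needed) and any tie-breaking among Borda maximizers.
   Context: Let $C$ be a set of $m$ candidates. A ranking is a strict linear order over $C$; $\mathcal{R}$ denotes the set of all rankings over $C$. A ranking profile is a function $R:\mathcal{R}\to[0,1]$ with $\sum_\succ R(\succ)=1$. For a ranking $\succ$, $A(\succ)=\{(x,y)\in C\times C:x\succ y\}$. For $x\in X\subseteq C$, $u(\succ,x,X)=|\{y\in X\setminus\{x\}:x\succ y\}|$; for $b:\mathcal{R}\to\mathbb{R}_{\geq0}$, $U(b,x,X)=\sum_\succ b(\succ)u(\succ,x,X)$. Flow-adjusting Borda rule: set $X_1=C$, $b_1(\succ)=R(\succ)\binom{m}{2}$. In round $i=1,\dots,m$: choose $x^*\in\arg\max_{x\in X_i}U(b_i,x,X_i)$, place it at position $i$, set $X_{i+1}=X_i\setminus\{x^*\}$. Build the flow network $G_{x^*}$ with vertices: source $s$, a vertex $v_\succ$ for each $\succ\in\mathcal{R}$, a vertex $v_y$ for each $y\in X_i\setminus\{x^*\}$, sink $t$; edges $(s,v_\succ)$ with capacity $b_i(\succ)$; edges $(v_\succ,v_y)$ with unbounded capacity whenever $x^*\succ y$; edges $(v_y,t)$ with capacity $1$. Let $f$ be a maximum $s$-$t$ flow in $G_{x^*}$ (the rule's default choice is one minimizing $\max_{\succ}\frac{f(s,v_\succ)}{b_i(\succ)u(\succ,x^*,X_i)}$ with $0/0=0$),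 and set $b_{i+1}(\succ)=b_i(\succ)-f(s,v_\succ)$. A ranking $\rhd=x_1,\dots,x_m$ is pair-priceable for $R$ if there is $\pi:\mathcal{R}\times A(\rhd)\to[0,1]$ such that (1) $\pi(\succ,(x_i,x_j))\leq u(\succ,x_i,\{x_i,x_j\})$ for all $\succ$ and $(x_i,x_j)\in A(\rhd)$; (2) $\sum_{(x_i,x_j)\in A(\rhd)}\pi(\succ,(x_i,x_j))\leq\binom{m}{2}R(\succ)$ for all $\succ$; (3) $\sum_\succ\pi(\succ,(x_i,x_j))\leq1$ for all $(x_i,x_j)\in A(\rhd)$; (4) $\sum_\succ\sum_{(x_i,x_j)\in A(\rhd)}\pi(\succ,(x_i,x_j))>\binom{m}{2}-1$. *)

theory Defs
  imports Main "HOL-Library.Extended_Real"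
begin

text \<open>A ranking over the finite candidate set C is a list listing every candidate exactly once;
  earlier position = more preferred.\<close>

definition rankings :: "'a set \<Rightarrow> 'a list set" where
  "rankings C = {r. distinct r \<and> set r = C}"

definition prefers :: "'a list \<Rightarrow> 'a \<Rightarrow> 'a \<Rightarrow> bool" where
  "prefers r x y \<longleftrightarrow> (\<exists>i j. i < j \<and> j < length r \<and> r ! i = x \<and> r ! j = y)"

definition pairs_of :: "'a list \<Rightarrow> ('a \<times> 'a) set" where
  "pairs_of r = {(x, y). prefers r x y}"

definition is_profile :: "'a set \<Rightarrow> ('a list \<Rightarrow> real) \<Rightarrow> bool" where
  "is_profile C R \<longleftrightarrow> (\<forall>r\<in>rankings C. 0 \<le> R r \<and> R r \<le> 1) \<and> (\<Sum>r\<in>rankings C. R r) = 1"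

definition util :: "'a list \<Rightarrow> 'a \<Rightarrow> 'a set \<Rightarrow> nat" where
  "util r x X = card {y \<in> X - {x}. prefers r x y}"

definition Util :: "'a set \<Rightarrow> ('a list \<Rightarrow> real) \<Rightarrow> 'a \<Rightarrow> 'a set \<Rightarrow> real" where
  "Util C b x X = (\<Sum>r\<in>rankings C. b r * real (util r x X))"

definition is_flow :: "'v set \<Rightarrow> ('v \<times> 'v) set \<Rightarrow> ('v \<times> 'v \<Rightarrow> ereal) \<Rightarrow> 'v \<Rightarrow> 'v
    \<Rightarrow> ('v \<times> 'v \<Rightarrow> real) \<Rightarrow> bool" where
  "is_flow V E cap s t f \<longleftrightarrow>
     (\<forall>e. e \<notin> E \<longrightarrow> f e = 0) \<and>
     (\<forall>e\<in>E. 0 \<le> f e \<and> ereal (f e) \<le> cap e) \<and>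
     (\<forall>v\<in>V - {s, t}. (\<Sum>u\<in>V. f (u, v)) = (\<Sum>w\<in>V. f (v, w)))"

definition flow_value :: "'v set \<Rightarrow> 'v \<Rightarrow> ('v \<times> 'v \<Rightarrow> real) \<Rightarrow> real" where
  "flow_value V s f = (\<Sum>w\<in>V. f (s, w)) - (\<Sum>u\<in>V. f (u, s))"

definition is_max_flow :: "'v set \<Rightarrow> ('v \<times> 'v) set \<Rightarrow> ('v \<times> 'v \<Rightarrow> ereal) \<Rightarrow> 'v \<Rightarrow> 'v
    \<Rightarrow> ('v \<times> 'v \<Rightarrow> real) \<Rightarrow> bool" where
  "is_max_flow V E cap s t f \<longleftrightarrow> is_flow V E cap s t f \<and>
     (\<forall>g. is_flow V E cap s t g \<longrightarrow> flow_value V s g \<le> flow_value V s f)"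

datatype 'a vtx = Src | Snk | RkV "'a list" | CdV 'a

definition netV :: "'a set \<Rightarrow> 'a set \<Rightarrow> 'a \<Rightarrow> 'a vtx set" where
  "netV C X x = {Src, Snk} \<union> RkV ` rankings C \<union> CdV ` (X - {x})"

definition netE :: "'a set \<Rightarrow> 'a set \<Rightarrow> 'a \<Rightarrow> ('a vtx \<times> 'a vtx) set" where
  "netE C X x =
     {(Src, RkV r) | r. r \<in> rankings C} \<union>
     {(RkV r, CdV y) | r y. r \<in> rankings C \<and> y \<in> X - {x} \<and> prefers r x y} \<union>
     {(CdV y, Snk) | y. y \<in> X - {x}}"

fun netCap :: "('a list \<Rightarrow> real) \<Rightarrow> 'a vtx \<times> 'a vtx \<Rightarrow> ereal" where
  "netCap b (Src, RkV r) = ereal (b r)"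
| "netCap b (RkV r, CdV y) = \<infinity>"
| "netCap b (CdV y, Snk) = 1"
| "netCap b _ = 0"

text \<open>Rounds are 0-indexed: round i (i < m) uses X_i = C minus the first i chosen candidates
  and budgets b i; xs is the output ranking.\<close>

definition FA_Borda_run :: "'a set \<Rightarrow> ('a list \<Rightarrow> real) \<Rightarrow> 'a list \<Rightarrow> (nat \<Rightarrow> 'a list \<Rightarrow> real)
    \<Rightarrow> bool" where
  "FA_Borda_run C R xs b \<longleftrightarrow>
     length xs = card C \<and>
     b 0 = (\<lambda>r. R r * real (card C choose 2)) \<and>
     (\<forall>i < card C.
        (let X = C - set (take i xs); x = xs ! i in
          x \<in> X \<and> (\<forall>y\<in>X. Util C (b i) y X \<le> Util C (b i) x X) \<and>
          (\<exists>f. is_max_flow (netV C X x) (netE C X x) (netCap (b i)) Src Snk f \<and>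
               (\<forall>r. b (Suc i) r = b i r - f (Src, RkV r)))))"

definition FA_Borda :: "'a set \<Rightarrow> ('a list \<Rightarrow> real) \<Rightarrow> 'a list \<Rightarrow> bool" where
  "FA_Borda C R xs \<longleftrightarrow> (\<exists>b. FA_Borda_run C R xs b)"

definition pair_priceable :: "'a set \<Rightarrow> ('a list \<Rightarrow> real) \<Rightarrow> 'a list \<Rightarrow> bool" where
  "pair_priceable C R rk \<longleftrightarrow>
     (\<exists>\<pi> :: 'a list \<Rightarrow> 'a \<times> 'a \<Rightarrow> real.
        (\<forall>r\<in>rankings C. \<forall>p\<in>pairs_of rk. 0 \<le> \<pi> r p \<and> \<pi> r p \<le> 1) \<and>
        (\<forall>r\<in>rankings C. \<forall>(x, y)\<in>pairs_of rk. \<pi> r (x, y) \<le> real (util r x {x, y})) \<and>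
        (\<forall>r\<in>rankings C. (\<Sum>p\<in>pairs_of rk. \<pi> r p) \<le> real (card C choose 2) * R r) \<and>
        (\<forall>p\<in>pairs_of rk. (\<Sum>r\<in>rankings C. \<pi> r p) \<le> 1) \<and>
        (\<Sum>r\<in>rankings C. \<Sum>p\<in>pairs_of rk. \<pi> r p) > real (card C choose 2) - 1)"

end

theory Submission
  imports Defs
begin

lemma finite_rankings: "finite C \<Longrightarrow> finite (rankings C)"
  unfolding rankings_def
  by (rule finite_subset[OF _ finite_subset_distinct[of C]]) auto

lemma prefers_in: "prefers r x y \<Longrightarrow> x \<in> set r \<and> y \<in> set r"
  unfolding prefers_def by auto

lemma prefers_neq: "distinct r \<Longrightarrow> prefers r x y \<Longrightarrow> x \<noteq> y"
  unfolding prefers_def using nth_eq_iff_index_eq by fastforce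

lemma prefers_asym: "distinct r \<Longrightarrow> prefers r x y \<Longrightarrow> \<not> prefers r y x"
  unfolding prefers_def using nth_eq_iff_index_eq
  by (metis less_asym order.strict_trans)

lemma prefers_trans: "distinct r \<Longrightarrow> prefers r x y \<Longrightarrow> prefers r y z \<Longrightarrow> prefers r x z"
  unfolding prefers_def using nth_eq_iff_index_eq
  by (metis order.strict_trans)

lemma prefers_total: "x \<in> set r \<Longrightarrow> y \<in> set r \<Longrightarrow> x \<noteq> y \<Longrightarrow> prefers r x y \<or> prefers r y x"
  unfolding prefers_def in_set_conv_nth
  by (metis linorder_neqE_nat)

lemma prefers_nth: "distinct r \<Longrightarrow> j < length r \<Longrightarrow> i < length r \<Longrightarrow> prefers r (r!i) (r!j) \<longleftrightarrow> i < j"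
  unfolding prefers_def
  apply (rule iffI)
   apply (elim exE conjE)
   apply (metis nth_eq_iff_index_eq order.strict_trans)
  by blast

lemma sum_inj_lb:
  fixes f :: "'b \<Rightarrow> nat"
  shows "finite Z \<Longrightarrow> inj_on f Z \<Longrightarrow> \<forall>y\<in>Z. c \<le> f y \<Longrightarrow>
    real (card Z) * (2 * real c + real (card Z) - 1) \<le> 2 * real (\<Sum>y\<in>Z. f y)"
proof (induction "card Z" arbitrary: Z)
  case 0
  then show ?case by simp
next
  case (Suc k)
  then have ne: "Z \<noteq> {}" by auto
  have fin: "finite (f ` Z)" using Suc.prems by auto
  define M where "M = Max (f ` Z)"
  have "M \<in> f ` Z" unfolding M_def using fin ne by auto
  then obtain y0 where y0: "y0 \<in> Z" "f y0 = M" by auto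
  have le: "\<forall>y\<in>Z. f y \<le> M" unfolding M_def using fin by auto
  have "f ` Z \<subseteq> {c..M}" using le Suc.prems by auto
  then have "card (f ` Z) \<le> card {c..M}" by (rule card_mono[rotated]) simp
  moreover have "card (f ` Z) = Suc k" using Suc.prems Suc.hyps card_image by metis
  ultimately have Mb: "Suc k \<le> M + 1 - c" by simp
  have ck: "c \<le> M" using y0 Suc.prems by auto
  have ih: "real (card (Z - {y0})) * (2 * real c + real (card (Z - {y0})) - 1)
      \<le> 2 * real (\<Sum>y\<in>Z - {y0}. f y)"
    apply (rule Suc.hyps(1))
    using Suc y0 by (auto intro: inj_on_subset)
  have cz: "card (Z - {y0}) = k" using Suc.hyps y0 by simp
  have sz: "(\<Sum>y\<in>Z. f y) = f y0 + (\<Sum>y\<in>Z - {y0}. f y)"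
    using Suc.prems(1) y0(1) by (simp add: sum.remove)
  have "real M \<ge> real c + real k" using Mb ck by linarith
  then show ?case using ih cz sz y0(2) Suc.hyps(2)[symmetric] by (simp add: algebra_simps)
qed

lemma util_lt:
  assumes "distinct r" "finite X" "y \<in> X" "y' \<in> X" "prefers r y y'"
  shows "util r y' X < util r y X"
proof -
  have "{z \<in> X - {y'}. prefers r y' z} \<subset> {z \<in> X - {y}. prefers r y z}"
  proof
    show "{z \<in> X - {y'}. prefers r y' z} \<subseteq> {z \<in> X - {y}. prefers r y z}"
    proof
      fix z assume "z \<in> {z \<in> X - {y'}. prefers r y' z}"
      then have z: "z \<in> X" "prefers r y' z" by auto
      have "prefers r y z" using prefers_trans[OF assms(1) assms(5) z(2)] .
      moreover have "z \<noteq> y" using prefers_asym[OF assms(1) assms(5)] z(2) by auto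
      ultimately show "z \<in> {z \<in> X - {y}. prefers r y z}" using z by auto
    qed
    show "{z \<in> X - {y'}. prefers r y' z} \<noteq> {z \<in> X - {y}. prefers r y z}"
    proof -
      have "y' \<in> {z \<in> X - {y}. prefers r y z}" using assms prefers_neq[OF assms(1) assms(5)] by auto
      then show ?thesis by auto
    qed
  qed
  then show ?thesis unfolding util_def using assms(2) by (simp add: psubset_card_mono)
qed

lemma util_inj:
  assumes "distinct r" "finite X" "X \<subseteq> set r"
  shows "inj_on (\<lambda>y. util r y X) X"
  apply (rule inj_onI) using assms prefers_total util_lt by (metis less_irrefl subsetD)

lemma util_le:
  assumes "finite X" "x \<in> X"
  shows "util r x X \<le> card X - 1"
proof -
  have "util r x X \<le> card (X - {x})" unfolding util_def
    by (rule card_mono) (use assms in auto)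
  then show ?thesis using assms by simp
qed

lemma borda_bound:
  assumes C: "finite C" and XC: "X \<subseteq> C" and x: "x \<in> X" and Z: "Z \<subseteq> X - {x}" "Z \<noteq> {}"
    and bnn: "\<forall>r\<in>rankings C. 0 \<le> b r"
    and bmax: "\<forall>y\<in>X. Util C b y X \<le> Util C b x X"
  shows "(real (card Z) + 1) * (\<Sum>r\<in>rankings C. b r)
     \<le> 2 * real (card X) * (\<Sum>r\<in>{r\<in>rankings C. \<exists>y\<in>Z. prefers r x y}. b r)"
proof -
  define Rk where "Rk = rankings C"
  define P where "P = {r\<in>Rk. \<exists>y\<in>Z. prefers r x y}"
  define k where "k = real (card Z)"
  define n where "n = real (card X)"
  have finX: "finite X" using C XC finite_subset by auto
  have finZ: "finite Z" using finX Z finite_subset by (meson Diff_subset subset_trans)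
  have kpos: "k > 0" using finZ Z(2) unfolding k_def by (simp add: card_gt_0_iff)
  have finRk: "finite Rk" unfolding Rk_def using finite_rankings[OF C] .
  have "card X \<ge> 1" using x finX by (metis One_nat_def Suc_leI card_gt_0_iff empty_iff)
  then have n1: "real (card X - 1) = n - 1" unfolding n_def by (simp add: of_nat_diff)
  define \<phi> where "\<phi> r = 2 * real (\<Sum>y\<in>Z. util r y X) - 2 * k * real (util r x X)" for r
  define \<psi> where "\<psi> r = k * (k + 1) - (if r \<in> P then 2 * k * n else 0)" for r
  have h1: "(\<Sum>r\<in>Rk. b r * \<phi> r) \<le> 0"
  proof -
    have "(\<Sum>y\<in>Z. Util C b y X) \<le> (\<Sum>y\<in>Z. Util C b x X)"
      by (rule sum_mono) (use bmax Z in auto)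
    also have "\<dots> = k * Util C b x X" unfolding k_def by simp
    finally have a: "(\<Sum>y\<in>Z. Util C b y X) \<le> k * Util C b x X" .
    have b: "(\<Sum>y\<in>Z. Util C b y X) = (\<Sum>r\<in>Rk. b r * real (\<Sum>y\<in>Z. util r y X))"
      unfolding Util_def Rk_def of_nat_sum sum_distrib_left by (rule sum.swap)
    have c: "(\<Sum>r\<in>Rk. b r * \<phi> r) = 2 * (\<Sum>r\<in>Rk. b r * real (\<Sum>y\<in>Z. util r y X))
        - 2 * k * Util C b x X"
      unfolding \<phi>_def Util_def Rk_def
      by (simp add: sum_subtractf sum_distrib_left algebra_simps)
    show ?thesis using a b c by linarith
  qed
  have h2: "\<psi> r \<le> \<phi> r" if r: "r \<in> Rk" for r
  proof -
    have dr: "distinct r" and sr: "set r = C" using r unfolding Rk_def rankings_def by auto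
    have inj: "inj_on (\<lambda>y. util r y X) Z"
      using util_inj[OF dr finX] XC sr Z by (meson Diff_subset inj_on_subset subset_trans)
    show ?thesis
    proof (cases "r \<in> P")
      case True
      have "k * (2 * real 0 + k - 1) \<le> 2 * real (\<Sum>y\<in>Z. util r y X)"
        unfolding k_def by (rule sum_inj_lb[OF finZ inj]) auto
      moreover have "real (util r x X) \<le> n - 1" using util_le[OF finX x, of r] n1
        by (metis of_nat_le_iff)
      moreover have "2 * k * real (util r x X) \<le> 2 * k * (n - 1)"
        using kpos calculation(2) by (intro mult_left_mono) auto
      ultimately have "k * (k - 1) - 2 * k * (n - 1) \<le> \<phi> r"
        unfolding \<phi>_def by simp
      then show ?thesis unfolding \<psi>_def using True by (simp add: algebra_simps)
    next
      case False
      have "\<forall>y\<in>Z. util r x X + 1 \<le> util r y X"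
      proof
        fix y assume y: "y \<in> Z"
        have "\<not> prefers r x y" using False y r unfolding P_def by auto
        moreover have "y \<noteq> x" "y \<in> set r" "x \<in> set r" using y Z x XC sr by auto
        ultimately have "prefers r y x" using prefers_total by metis
        moreover have "y \<in> X" using y Z by auto
        ultimately have "util r x X < util r y X" using util_lt[OF dr finX _ x] by blast
        then show "util r x X + 1 \<le> util r y X" by simp
      qed
      then have "k * (2 * real (util r x X + 1) + k - 1) \<le> 2 * real (\<Sum>y\<in>Z. util r y X)"
        unfolding k_def by (rule sum_inj_lb[OF finZ inj])
      then show ?thesis unfolding \<psi>_def \<phi>_def using False by (simp add: algebra_simps)
    qed
  qed
  have h3: "(\<Sum>r\<in>Rk. b r * \<psi> r) \<le> (\<Sum>r\<in>Rk. b r * \<phi> r)"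
    by (rule sum_mono) (use h2 bnn in \<open>auto simp: Rk_def intro: mult_left_mono\<close>)
  have h4: "(\<Sum>r\<in>Rk. b r * \<psi> r) = k * (k + 1) * (\<Sum>r\<in>Rk. b r) - 2 * k * n * (\<Sum>r\<in>P. b r)"
  proof -
    have "(\<Sum>r\<in>Rk. b r * \<psi> r) = (\<Sum>r\<in>Rk. k * (k + 1) * b r - 2 * k * n * (if r \<in> P then b r else 0))"
      unfolding \<psi>_def by (rule sum.cong) (auto simp: algebra_simps)
    also have "\<dots> = k * (k + 1) * (\<Sum>r\<in>Rk. b r) - 2 * k * n * (\<Sum>r\<in>Rk. if r \<in> P then b r else 0)"
      by (simp add: sum_subtractf sum_distrib_left)
    also have "(\<Sum>r\<in>Rk. if r \<in> P then b r else 0) = (\<Sum>r\<in>P. b r)"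
      unfolding P_def using finRk by (simp add: sum.inter_filter)
    finally show ?thesis .
  qed
  have "k * ((k + 1) * (\<Sum>r\<in>Rk. b r)) \<le> k * (2 * n * (\<Sum>r\<in>P. b r))"
    using h1 h3 h4 by (simp add: algebra_simps)
  then have "(k + 1) * (\<Sum>r\<in>Rk. b r) \<le> 2 * n * (\<Sum>r\<in>P. b r)"
    using kpos by (simp add: mult_le_cancel_left)
  then show ?thesis unfolding k_def n_def Rk_def P_def .
qed

definition feas :: "'r set \<Rightarrow> 'y set \<Rightarrow> ('r \<Rightarrow> 'y \<Rightarrow> bool) \<Rightarrow> ('r \<Rightarrow> real) \<Rightarrow> ('r \<Rightarrow> 'y \<Rightarrow> real) \<Rightarrow> bool" where
  "feas Rk Y E b g \<longleftrightarrow> (\<forall>r y. 0 \<le> g r y) \<and> (\<forall>r y. g r y \<noteq> 0 \<longrightarrow> r \<in> Rk \<and> y \<in> Y \<and> E r y)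
     \<and> (\<forall>r\<in>Rk. (\<Sum>y\<in>Y. g r y) \<le> b r) \<and> (\<forall>y\<in>Y. (\<Sum>r\<in>Rk. g r y) \<le> 1)"

definition bval :: "'r set \<Rightarrow> 'y set \<Rightarrow> ('r \<Rightarrow> 'y \<Rightarrow> real) \<Rightarrow> real" where
  "bval Rk Y g = (\<Sum>r\<in>Rk. \<Sum>y\<in>Y. g r y)"

definition good :: "'r set \<Rightarrow> 'y set \<Rightarrow> ('r \<Rightarrow> 'y \<Rightarrow> bool) \<Rightarrow> ('r \<Rightarrow> real) \<Rightarrow> ('r \<Rightarrow> 'y \<Rightarrow> real) \<Rightarrow> 'y \<Rightarrow> bool" where
  "good Rk Y E b g y \<longleftrightarrow> y \<in> Y \<and> (\<exists>h \<epsilon>. \<epsilon> > (0::real) \<and>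
     (\<forall>r y'. h r y' \<noteq> 0 \<longrightarrow> r \<in> Rk \<and> y' \<in> Y \<and> E r y') \<and>
     (\<forall>r y'. 0 \<le> g r y' + h r y') \<and>
     (\<forall>r\<in>Rk. (\<Sum>y'\<in>Y. g r y' + h r y') \<le> b r) \<and>
     (\<forall>y'\<in>Y. (\<Sum>r\<in>Rk. h r y') = (if y' = y then \<epsilon> else 0)))"

lemma good_base:
  assumes fin: "finite Rk" "finite Y" and f: "feas Rk Y E b g"
    and r: "r \<in> Rk" "(\<Sum>y\<in>Y. g r y) < b r" and y: "y \<in> Y" "E r y"
  shows "good Rk Y E b g y"
proof -
  define \<epsilon> where "\<epsilon> = b r - (\<Sum>y\<in>Y. g r y)"
  define h where "h r' y' = (if r' = r \<and> y' = y then \<epsilon> else 0)" for r' y'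
  have e: "\<epsilon> > 0" using r unfolding \<epsilon>_def by simp
  have 1: "\<forall>r' y'. h r' y' \<noteq> 0 \<longrightarrow> r' \<in> Rk \<and> y' \<in> Y \<and> E r' y'" unfolding h_def using r y by auto
  have 2: "\<forall>r' y'. 0 \<le> g r' y' + h r' y'" using f e unfolding feas_def h_def by auto
  have 3: "\<forall>r'\<in>Rk. (\<Sum>y'\<in>Y. g r' y' + h r' y') \<le> b r'"
  proof
    fix r' assume r': "r' \<in> Rk"
    have "(\<Sum>y'\<in>Y. g r' y' + h r' y') = (\<Sum>y'\<in>Y. g r' y') + (if r' = r then \<epsilon> else 0)"
      unfolding h_def using fin y by (simp add: sum.distrib)
    then show "(\<Sum>y'\<in>Y. g r' y' + h r' y') \<le> b r'" using f r' unfolding feas_def \<epsilon>_def by auto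
  qed
  have 4: "\<forall>y'\<in>Y. (\<Sum>r'\<in>Rk. h r' y') = (if y' = y then \<epsilon> else 0)"
    unfolding h_def using fin r by (auto simp: if_distrib)
  show ?thesis unfolding good_def using y e 1 2 3 4 by blast
qed

lemma good_step:
  assumes fin: "finite Rk" "finite Y" and f: "feas Rk Y E b g"
    and gy: "good Rk Y E b g y" and r: "r \<in> Rk" "g r y > 0" and y': "y' \<in> Y" "E r y'"
  shows "good Rk Y E b g y'"
proof (cases "y' = y")
  case True then show ?thesis using gy by simp
next
  case False
  have yY: "y \<in> Y" using gy unfolding good_def by auto
  obtain h \<epsilon> where e: "\<epsilon> > 0"
    and h1: "\<forall>r y'. h r y' \<noteq> 0 \<longrightarrow> r \<in> Rk \<and> y' \<in> Y \<and> E r y'"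
    and h2: "\<forall>r y'. 0 \<le> g r y' + h r y'"
    and h3: "\<forall>r\<in>Rk. (\<Sum>y'\<in>Y. g r y' + h r y') \<le> b r"
    and h4: "\<forall>y'\<in>Y. (\<Sum>r\<in>Rk. h r y') = (if y' = y then \<epsilon> else 0)"
    using gy unfolding good_def by blast
  define \<delta> where "\<delta> = min (\<epsilon> / 2) (g r y / 2)"
  define l where "l = \<delta> / \<epsilon>"
  have dpos: "\<delta> > 0" unfolding \<delta>_def using e r by auto
  have l0: "0 \<le> l" and l1: "l \<le> 1 / 2" unfolding l_def \<delta>_def using e dpos r
    by (auto simp: divide_simps)
  have le: "l * \<epsilon> = \<delta>" unfolding l_def using e by simp
  have dg: "\<delta> \<le> (1 - l) * g r y"
  proof -
    have "\<delta> \<le> g r y / 2" unfolding \<delta>_def by simp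
    also have "\<dots> \<le> (1 - l) * g r y"
    proof -
      have "l * g r y \<le> (1/2) * g r y" using l1 r by (intro mult_right_mono) auto
      then show ?thesis by (simp add: algebra_simps)
    qed
    finally show ?thesis .
  qed
  define h' where "h' r0 y0 = l * h r0 y0 + (if r0 = r \<and> y0 = y' then \<delta> else 0)
       - (if r0 = r \<and> y0 = y then \<delta> else 0)" for r0 y0
  have comb: "0 \<le> g r0 y0 + l * h r0 y0" for r0 y0
  proof -
    have "g r0 y0 + l * h r0 y0 = (1 - l) * g r0 y0 + l * (g r0 y0 + h r0 y0)" by (simp add: algebra_simps)
    moreover have "0 \<le> (1 - l) * g r0 y0" using f l1 unfolding feas_def by simp
    moreover have "0 \<le> l * (g r0 y0 + h r0 y0)" using h2 l0 by simp
    ultimately show ?thesis by linarith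
  qed
  have 1: "\<forall>r0 y0. h' r0 y0 \<noteq> 0 \<longrightarrow> r0 \<in> Rk \<and> y0 \<in> Y \<and> E r0 y0"
  proof (intro allI impI)
    fix r0 y0 assume "h' r0 y0 \<noteq> 0"
    then have "h r0 y0 \<noteq> 0 \<or> (r0 = r \<and> y0 = y') \<or> (r0 = r \<and> y0 = y)" unfolding h'_def by (auto split: if_splits)
    moreover have "g r y \<noteq> 0" using r by simp
    then have "E r y" using f unfolding feas_def by blast
    ultimately show "r0 \<in> Rk \<and> y0 \<in> Y \<and> E r0 y0" using h1 r y' yY by auto
  qed
  have 2: "\<forall>r0 y0. 0 \<le> g r0 y0 + h' r0 y0"
  proof (intro allI)
    fix r0 y0
    show "0 \<le> g r0 y0 + h' r0 y0"
    proof (cases "r0 = r \<and> y0 = y")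
      case True
      have "0 \<le> l * (g r y + h r y)" using h2 l0 by simp
      then have "(1 - l) * g r y \<le> g r y + l * h r y" by (simp add: algebra_simps)
      then show ?thesis using True False dg unfolding h'_def by auto
    next
      case F2: False
      then show ?thesis using comb[of r0 y0] dpos unfolding h'_def by auto
    qed
  qed
  have 3: "\<forall>r0\<in>Rk. (\<Sum>y0\<in>Y. g r0 y0 + h' r0 y0) \<le> b r0"
  proof
    fix r0 assume r0: "r0 \<in> Rk"
    have "(\<Sum>y0\<in>Y. g r0 y0 + h' r0 y0) = (\<Sum>y0\<in>Y. (1 - l) * g r0 y0 + l * (g r0 y0 + h r0 y0))
        + (\<Sum>y0\<in>Y. (if r0 = r \<and> y0 = y' then \<delta> else 0)) - (\<Sum>y0\<in>Y. (if r0 = r \<and> y0 = y then \<delta> else 0))"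
      unfolding h'_def by (simp add: sum.distrib sum_subtractf algebra_simps)
    also have "(\<Sum>y0\<in>Y. (if r0 = r \<and> y0 = y' then \<delta> else 0)) = (\<Sum>y0\<in>Y. (if r0 = r \<and> y0 = y then \<delta> else 0))"
      using fin y' yY by (cases "r0 = r") simp_all
    also have "(\<Sum>y0\<in>Y. (1 - l) * g r0 y0 + l * (g r0 y0 + h r0 y0))
        = (1 - l) * (\<Sum>y0\<in>Y. g r0 y0) + l * (\<Sum>y0\<in>Y. g r0 y0 + h r0 y0)"
      by (simp only: sum.distrib flip: sum_distrib_left)
    finally have eq: "(\<Sum>y0\<in>Y. g r0 y0 + h' r0 y0) = (1 - l) * (\<Sum>y0\<in>Y. g r0 y0) + l * (\<Sum>y0\<in>Y. g r0 y0 + h r0 y0)"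
      by simp
    have "(1 - l) * (\<Sum>y0\<in>Y. g r0 y0) \<le> (1 - l) * b r0"
      using f r0 l1 unfolding feas_def by (intro mult_left_mono) auto
    moreover have "l * (\<Sum>y0\<in>Y. g r0 y0 + h r0 y0) \<le> l * b r0"
      using h3 r0 l0 by (intro mult_left_mono) auto
    ultimately show "(\<Sum>y0\<in>Y. g r0 y0 + h' r0 y0) \<le> b r0" unfolding eq by (simp add: algebra_simps)
  qed
  have 4: "\<forall>y0\<in>Y. (\<Sum>r0\<in>Rk. h' r0 y0) = (if y0 = y' then \<delta> else 0)"
  proof
    fix y0 assume y0: "y0 \<in> Y"
    have "(\<Sum>r0\<in>Rk. h' r0 y0) = l * (\<Sum>r0\<in>Rk. h r0 y0) + (\<Sum>r0\<in>Rk. (if r0 = r \<and> y0 = y' then \<delta> else 0))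
        - (\<Sum>r0\<in>Rk. (if r0 = r \<and> y0 = y then \<delta> else 0))"
      unfolding h'_def by (simp add: sum.distrib sum_subtractf sum_distrib_left)
    also have "\<dots> = l * (if y0 = y then \<epsilon> else 0) + (if y0 = y' then \<delta> else 0) - (if y0 = y then \<delta> else 0)"
    proof -
      have hs: "(\<Sum>r0\<in>Rk. h r0 y0) = (if y0 = y then \<epsilon> else 0)" using h4 y0 by blast
      have d1: "(\<Sum>r0\<in>Rk. (if r0 = r \<and> y0 = y' then \<delta> else 0)) = (if y0 = y' then \<delta> else 0)"
        using fin r by (cases "y0 = y'") simp_all
      have d2: "(\<Sum>r0\<in>Rk. (if r0 = r \<and> y0 = y then \<delta> else 0)) = (if y0 = y then \<delta> else 0)"
        using fin r by (cases "y0 = y") simp_all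
      show ?thesis unfolding hs d1 d2 ..
    qed
    finally show "(\<Sum>r0\<in>Rk. h' r0 y0) = (if y0 = y' then \<delta> else 0)" using le False by auto
  qed
  show ?thesis unfolding good_def using y' dpos 1 2 3 4 by blast
qed

lemma good_sat:
  assumes fin: "finite Rk" "finite Y" and f: "feas Rk Y E b g"
    and mx: "\<forall>g'. feas Rk Y E b g' \<longrightarrow> bval Rk Y g' \<le> bval Rk Y g"
    and gy: "good Rk Y E b g y"
  shows "1 \<le> (\<Sum>r\<in>Rk. g r y)"
proof (rule ccontr)
  assume "\<not> 1 \<le> (\<Sum>r\<in>Rk. g r y)"
  then have c1: "(\<Sum>r\<in>Rk. g r y) < 1" by simp
  have yY: "y \<in> Y" using gy unfolding good_def by auto
  obtain h \<epsilon> where e: "\<epsilon> > 0"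
    and h1: "\<forall>r y'. h r y' \<noteq> 0 \<longrightarrow> r \<in> Rk \<and> y' \<in> Y \<and> E r y'"
    and h2: "\<forall>r y'. 0 \<le> g r y' + h r y'"
    and h3: "\<forall>r\<in>Rk. (\<Sum>y'\<in>Y. g r y' + h r y') \<le> b r"
    and h4: "\<forall>y'\<in>Y. (\<Sum>r\<in>Rk. h r y') = (if y' = y then \<epsilon> else 0)"
    using gy unfolding good_def by blast
  define t where "t = min 1 ((1 - (\<Sum>r\<in>Rk. g r y)) / \<epsilon>)"
  have t0: "0 < t" and t1: "t \<le> 1" unfolding t_def using c1 e by auto
  have te: "t * \<epsilon> \<le> 1 - (\<Sum>r\<in>Rk. g r y)"
  proof -
    have "t \<le> (1 - (\<Sum>r\<in>Rk. g r y)) / \<epsilon>" unfolding t_def by simp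
    then show ?thesis using e by (simp add: le_divide_eq)
  qed
  define g' where "g' r0 y0 = g r0 y0 + t * h r0 y0" for r0 y0
  have p1: "0 \<le> g' r0 y0" for r0 y0
  proof -
    have "g r0 y0 + t * h r0 y0 = (1 - t) * g r0 y0 + t * (g r0 y0 + h r0 y0)" by (simp add: algebra_simps)
    moreover have "0 \<le> (1 - t) * g r0 y0" using f t1 unfolding feas_def by simp
    moreover have "0 \<le> t * (g r0 y0 + h r0 y0)" using h2 t0 by simp
    ultimately show "0 \<le> g' r0 y0" unfolding g'_def by linarith
  qed
  have p2: "r0 \<in> Rk \<and> y0 \<in> Y \<and> E r0 y0" if "g' r0 y0 \<noteq> 0" for r0 y0
  proof -
    have "g r0 y0 \<noteq> 0 \<or> h r0 y0 \<noteq> 0" using that unfolding g'_def by auto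
    then show ?thesis using f h1 unfolding feas_def by blast
  qed
  have p3: "(\<Sum>y0\<in>Y. g' r0 y0) \<le> b r0" if r0: "r0 \<in> Rk" for r0
  proof -
    have eq: "(\<Sum>y0\<in>Y. g' r0 y0) = (1 - t) * (\<Sum>y0\<in>Y. g r0 y0) + t * (\<Sum>y0\<in>Y. g r0 y0 + h r0 y0)"
    proof -
      have "(\<Sum>y0\<in>Y. g' r0 y0) = (\<Sum>y0\<in>Y. (1 - t) * g r0 y0 + t * (g r0 y0 + h r0 y0))"
        unfolding g'_def by (rule sum.cong) (auto simp: algebra_simps)
      then show ?thesis by (simp only: sum.distrib flip: sum_distrib_left)
    qed
    have "(1 - t) * (\<Sum>y0\<in>Y. g r0 y0) \<le> (1 - t) * b r0"
      using f r0 t1 unfolding feas_def by (intro mult_left_mono) auto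
    moreover have "t * (\<Sum>y0\<in>Y. g r0 y0 + h r0 y0) \<le> t * b r0"
      using h3 r0 t0 by (intro mult_left_mono) auto
    ultimately show ?thesis unfolding eq by (simp add: algebra_simps)
  qed
  have p4: "(\<Sum>r0\<in>Rk. g' r0 y0) \<le> 1" if y0: "y0 \<in> Y" for y0
  proof -
    have hs: "(\<Sum>r0\<in>Rk. h r0 y0) = (if y0 = y then \<epsilon> else 0)" using h4 y0 by blast
    have eq: "(\<Sum>r0\<in>Rk. g' r0 y0) = (\<Sum>r0\<in>Rk. g r0 y0) + t * (\<Sum>r0\<in>Rk. h r0 y0)"
      unfolding g'_def by (simp add: sum.distrib sum_distrib_left)
    show ?thesis
    proof (cases "y0 = y")
      case True then show ?thesis unfolding eq hs using te by simp
    next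
      case False then show ?thesis unfolding eq hs using f y0 unfolding feas_def by simp
    qed
  qed
  have fg: "feas Rk Y E b g'" unfolding feas_def using p1 p2 p3 p4 by blast
  have "bval Rk Y g' = bval Rk Y g + t * (\<Sum>r\<in>Rk. \<Sum>y0\<in>Y. h r y0)"
    unfolding bval_def g'_def by (simp add: sum.distrib sum_distrib_left)
  also have "(\<Sum>r\<in>Rk. \<Sum>y0\<in>Y. h r y0) = (\<Sum>y0\<in>Y. \<Sum>r\<in>Rk. h r y0)" by (rule sum.swap)
  also have "\<dots> = (\<Sum>y0\<in>Y. if y0 = y then \<epsilon> else 0)" using h4 by (intro sum.cong) auto
  also have "\<dots> = \<epsilon>" using fin yY by simp
  finally have "bval Rk Y g' = bval Rk Y g + t * \<epsilon>" .
  moreover have "t * \<epsilon> > 0" using t0 e by simp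
  ultimately show False using mx fg by force
qed

lemma cut_bound:
  assumes fin: "finite Rk" "finite Y" and f: "feas Rk Y E b g"
    and mx: "\<forall>g'. feas Rk Y E b g' \<longrightarrow> bval Rk Y g' \<le> bval Rk Y g"
  shows "\<exists>S\<subseteq>Y. real (card S) + (\<Sum>r\<in>{r\<in>Rk. \<exists>y\<in>Y-S. E r y}. b r) \<le> bval Rk Y g"
proof -
  define S where "S = {y\<in>Y. good Rk Y E b g y}"
  define T where "T = {r\<in>Rk. (\<Sum>y\<in>Y. g r y) < b r \<or> (\<exists>y\<in>S. g r y > 0)}"
  define P where "P = {r\<in>Rk. \<exists>y\<in>Y-S. E r y}"
  have g0: "\<And>r y. 0 \<le> g r y" using f unfolding feas_def by blast
  have clos: "y \<in> S" if "r \<in> T" "y \<in> Y" "E r y" for r y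
    using that good_base[OF fin f] good_step[OF fin f] unfolding T_def S_def by blast
  have PT: "r \<notin> T" if "r \<in> P" for r using that clos unfolding P_def by blast
  have SY: "S \<subseteq> Y" unfolding S_def by auto
  have "bval Rk Y g = (\<Sum>y\<in>Y. \<Sum>r\<in>Rk. g r y)" unfolding bval_def by (rule sum.swap)
  also have "\<dots> = (\<Sum>y\<in>S. \<Sum>r\<in>Rk. g r y) + (\<Sum>y\<in>Y-S. \<Sum>r\<in>Rk. g r y)"
    using fin SY by (metis (no_types, lifting) add.commute sum.subset_diff)
  finally have e1: "bval Rk Y g = (\<Sum>y\<in>S. \<Sum>r\<in>Rk. g r y) + (\<Sum>y\<in>Y-S. \<Sum>r\<in>Rk. g r y)" .
  have "real (card S) = (\<Sum>y\<in>S. 1)" by simp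
  also have "\<dots> \<le> (\<Sum>y\<in>S. \<Sum>r\<in>Rk. g r y)"
    by (rule sum_mono) (use good_sat[OF fin f mx] in \<open>auto simp: S_def\<close>)
  finally have e2: "real (card S) \<le> (\<Sum>y\<in>S. \<Sum>r\<in>Rk. g r y)" .
  have "(\<Sum>y\<in>Y-S. \<Sum>r\<in>Rk. g r y) = (\<Sum>r\<in>Rk. \<Sum>y\<in>Y-S. g r y)" by (rule sum.swap)
  also have "\<dots> \<ge> (\<Sum>r\<in>P. \<Sum>y\<in>Y-S. g r y)"
    by (rule sum_mono2) (use fin in \<open>auto simp: P_def intro: sum_nonneg g0\<close>)
  moreover have "(\<Sum>r\<in>P. \<Sum>y\<in>Y-S. g r y) = (\<Sum>r\<in>P. b r)"
  proof (rule sum.cong)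
    fix r assume rP: "r \<in> P"
    then have rR: "r \<in> Rk" and rT: "r \<notin> T" using PT unfolding P_def by auto
    have gS: "\<forall>y\<in>S. g r y = 0" 
    proof
      fix y assume "y \<in> S"
      then have "\<not> g r y > 0" using rT rR unfolding T_def by blast
      then show "g r y = 0" using g0[of r y] by linarith
    qed
    have "(\<Sum>y\<in>Y. g r y) = (\<Sum>y\<in>S. g r y) + (\<Sum>y\<in>Y-S. g r y)"
      using fin SY by (metis (no_types, lifting) add.commute sum.subset_diff)
    then have "(\<Sum>y\<in>Y-S. g r y) = (\<Sum>y\<in>Y. g r y)" using gS by simp
    moreover have "(\<Sum>y\<in>Y. g r y) = b r"
    proof -
      have "\<not> (\<Sum>y\<in>Y. g r y) < b r" using rT rR unfolding T_def by blast
      moreover have "(\<Sum>y\<in>Y. g r y) \<le> b r" using rR f unfolding feas_def by blast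
      ultimately show ?thesis by linarith
    qed
    ultimately show "(\<Sum>y\<in>Y-S. g r y) = b r" by simp
  qed simp
  ultimately have e3: "(\<Sum>r\<in>P. b r) \<le> (\<Sum>y\<in>Y-S. \<Sum>r\<in>Rk. g r y)" by simp
  show ?thesis using e1 e2 e3 SY unfolding P_def by (intro exI[of _ S]) auto
qed

lemma sum_netV:
  assumes "finite C" "finite X"
  shows "(\<Sum>v\<in>netV C X x. \<phi> v) = \<phi> Src + \<phi> Snk + (\<Sum>r\<in>rankings C. \<phi> (RkV r)) + (\<Sum>y\<in>X-{x}. \<phi> (CdV y))"
proof -
  have fr: "finite (rankings C)" using finite_rankings[OF assms(1)] .
  have eq: "netV C X x = insert Src (insert Snk (RkV ` rankings C \<union> CdV ` (X - {x})))"
    unfolding netV_def by auto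
  have "(\<Sum>v\<in>RkV ` rankings C \<union> CdV ` (X - {x}). \<phi> v) = (\<Sum>v\<in>RkV ` rankings C. \<phi> v) + (\<Sum>v\<in>CdV ` (X - {x}). \<phi> v)"
    by (rule sum.union_disjoint) (use fr assms in auto)
  also have "(\<Sum>v\<in>RkV ` rankings C. \<phi> v) = (\<Sum>r\<in>rankings C. \<phi> (RkV r))"
    by (subst sum.reindex) (auto simp: inj_on_def)
  also have "(\<Sum>v\<in>CdV ` (X - {x}). \<phi> v) = (\<Sum>y\<in>X-{x}. \<phi> (CdV y))"
    by (subst sum.reindex) (auto simp: inj_on_def)
  finally have u: "(\<Sum>v\<in>RkV ` rankings C \<union> CdV ` (X - {x}). \<phi> v) = (\<Sum>r\<in>rankings C. \<phi> (RkV r)) + (\<Sum>y\<in>X-{x}. \<phi> (CdV y))" .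
  have f1: "finite (RkV ` rankings C \<union> CdV ` (X - {x}))" using fr assms by auto
  have n1: "Snk \<notin> RkV ` rankings C \<union> CdV ` (X - {x})" by auto
  have n2: "Src \<notin> insert Snk (RkV ` rankings C \<union> CdV ` (X - {x}))" by auto
  show ?thesis unfolding eq sum.insert[OF finite_insert[THEN iffD2, OF f1] n2] sum.insert[OF f1 n1] u
    by (simp add: algebra_simps)
qed

lemma netE_Src1: "(Src, v) \<in> netE C X x \<longleftrightarrow> (\<exists>r. v = RkV r \<and> r \<in> rankings C)"
  unfolding netE_def by auto
lemma netE_Src2: "(u, Src) \<notin> netE C X x"
  unfolding netE_def by auto
lemma netE_Snk1: "(Snk, v) \<notin> netE C X x"
  unfolding netE_def by auto
lemma netE_Snk2: "(u, Snk) \<in> netE C X x \<longleftrightarrow> (\<exists>y. u = CdV y \<and> y \<in> X - {x})"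
  unfolding netE_def by auto
lemma netE_Rk1: "(RkV r, v) \<in> netE C X x \<longleftrightarrow> (\<exists>y. v = CdV y \<and> r \<in> rankings C \<and> y \<in> X - {x} \<and> prefers r x y)"
  unfolding netE_def by auto
lemma netE_Rk2: "(u, RkV r) \<in> netE C X x \<longleftrightarrow> u = Src \<and> r \<in> rankings C"
  unfolding netE_def by auto
lemma netE_Cd1: "(CdV y, v) \<in> netE C X x \<longleftrightarrow> v = Snk \<and> y \<in> X - {x}"
  unfolding netE_def by auto
lemma netE_Cd2: "(u, CdV y) \<in> netE C X x \<longleftrightarrow> (\<exists>r. u = RkV r \<and> r \<in> rankings C \<and> y \<in> X - {x} \<and> prefers r x y)"
  unfolding netE_def by auto

lemmas netE_simps = netE_Src1 netE_Src2 netE_Snk1 netE_Snk2 netE_Rk1 netE_Rk2 netE_Cd1 netE_Cd2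

lemma flow_facts:
  assumes C: "finite C" and X: "finite X" and fl: "is_flow (netV C X x) (netE C X x) (netCap b) Src Snk f"
  shows "\<forall>r\<in>rankings C. 0 \<le> f (Src, RkV r) \<and> f (Src, RkV r) \<le> b r"
    and "\<forall>r\<in>rankings C. f (Src, RkV r) = (\<Sum>y\<in>X-{x}. f (RkV r, CdV y))"
    and "\<forall>y\<in>X-{x}. (\<Sum>r\<in>rankings C. f (RkV r, CdV y)) = f (CdV y, Snk) \<and> f (CdV y, Snk) \<le> 1"
    and "flow_value (netV C X x) Src f = (\<Sum>r\<in>rankings C. f (Src, RkV r))"
    and "\<forall>r y. 0 \<le> f (RkV r, CdV y)"
    and "\<forall>r y. f (RkV r, CdV y) \<noteq> 0 \<longrightarrow> r \<in> rankings C \<and> y \<in> X - {x} \<and> prefers r x y"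
proof -
  have fz: "\<And>e. e \<notin> netE C X x \<Longrightarrow> f e = 0" using fl unfolding is_flow_def by blast
  have fc: "\<And>e. e \<in> netE C X x \<Longrightarrow> 0 \<le> f e \<and> ereal (f e) \<le> netCap b e" using fl unfolding is_flow_def by blast
  have cons: "\<And>v. v \<in> netV C X x - {Src, Snk} \<Longrightarrow> (\<Sum>u\<in>netV C X x. f (u, v)) = (\<Sum>w\<in>netV C X x. f (v, w))"
    using fl unfolding is_flow_def by blast
  show "\<forall>r\<in>rankings C. 0 \<le> f (Src, RkV r) \<and> f (Src, RkV r) \<le> b r"
  proof
    fix r assume r: "r \<in> rankings C"
    then have "(Src, RkV r) \<in> netE C X x" by (simp add: netE_simps)
    from fc[OF this] show "0 \<le> f (Src, RkV r) \<and> f (Src, RkV r) \<le> b r" by simp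
  qed
  show "\<forall>r\<in>rankings C. f (Src, RkV r) = (\<Sum>y\<in>X-{x}. f (RkV r, CdV y))"
  proof
    fix r assume r: "r \<in> rankings C"
    have "RkV r \<in> netV C X x - {Src, Snk}" using r unfolding netV_def by auto
    from cons[OF this] show "f (Src, RkV r) = (\<Sum>y\<in>X-{x}. f (RkV r, CdV y))"
      unfolding sum_netV[OF C X] using r by (simp add: fz netE_simps)
  qed
  show "\<forall>y\<in>X-{x}. (\<Sum>r\<in>rankings C. f (RkV r, CdV y)) = f (CdV y, Snk) \<and> f (CdV y, Snk) \<le> 1"
  proof
    fix y assume y: "y \<in> X - {x}"
    have "CdV y \<in> netV C X x - {Src, Snk}" using y unfolding netV_def by auto
    from cons[OF this] have "(\<Sum>r\<in>rankings C. f (RkV r, CdV y)) = f (CdV y, Snk)"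
      unfolding sum_netV[OF C X] using y by (simp add: fz netE_simps)
    moreover have "(CdV y, Snk) \<in> netE C X x" using y by (simp add: netE_simps)
    from fc[OF this] have "f (CdV y, Snk) \<le> 1" by simp
    ultimately show "(\<Sum>r\<in>rankings C. f (RkV r, CdV y)) = f (CdV y, Snk) \<and> f (CdV y, Snk) \<le> 1" by simp
  qed
  show "flow_value (netV C X x) Src f = (\<Sum>r\<in>rankings C. f (Src, RkV r))"
    unfolding flow_value_def sum_netV[OF C X] by (simp add: fz netE_simps)
  show "\<forall>r y. 0 \<le> f (RkV r, CdV y)"
    using fz fc by (metis order_refl)
  show "\<forall>r y. f (RkV r, CdV y) \<noteq> 0 \<longrightarrow> r \<in> rankings C \<and> y \<in> X - {x} \<and> prefers r x y"
  proof (intro allI impI)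
    fix r y assume "f (RkV r, CdV y) \<noteq> 0"
    then have "(RkV r, CdV y) \<in> netE C X x" using fz by blast
    then show "r \<in> rankings C \<and> y \<in> X - {x} \<and> prefers r x y" unfolding netE_Rk1 by auto
  qed
qed

fun mkflow :: "'a list set \<Rightarrow> 'a set \<Rightarrow> ('a list \<Rightarrow> 'a \<Rightarrow> real) \<Rightarrow> 'a vtx \<times> 'a vtx \<Rightarrow> real" where
  "mkflow Rk Y g (Src, RkV r) = (if r \<in> Rk then (\<Sum>y\<in>Y. g r y) else 0)"
| "mkflow Rk Y g (RkV r, CdV y) = g r y"
| "mkflow Rk Y g (CdV y, Snk) = (if y \<in> Y then (\<Sum>r\<in>Rk. g r y) else 0)"
| "mkflow Rk Y g _ = 0"

lemma mkflow_is_flow: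
  assumes C: "finite C" and X: "finite X"
    and fg: "feas (rankings C) (X - {x}) (\<lambda>r y. prefers r x y) b g"
  shows "is_flow (netV C X x) (netE C X x) (netCap b) Src Snk (mkflow (rankings C) (X - {x}) g)"
    and "flow_value (netV C X x) Src (mkflow (rankings C) (X - {x}) g) = bval (rankings C) (X - {x}) g"
proof -
  let ?f = "mkflow (rankings C) (X - {x}) g"
  have g0: "\<And>r y. 0 \<le> g r y" and gs: "\<And>r y. g r y \<noteq> 0 \<Longrightarrow> r \<in> rankings C \<and> y \<in> X - {x} \<and> prefers r x y"
    and gr: "\<And>r. r \<in> rankings C \<Longrightarrow> (\<Sum>y\<in>X-{x}. g r y) \<le> b r"
    and gc: "\<And>y. y \<in> X - {x} \<Longrightarrow> (\<Sum>r\<in>rankings C. g r y) \<le> 1"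
    using fg unfolding feas_def by auto
  have p1: "?f e = 0" if "e \<notin> netE C X x" for e
  proof -
    obtain u v where e: "e = (u, v)" by (cases e)
    show ?thesis using that gs unfolding e by (cases u; cases v) (auto simp: netE_simps)
  qed
  have p2: "0 \<le> ?f e \<and> ereal (?f e) \<le> netCap b e" if "e \<in> netE C X x" for e
  proof -
    obtain u v where e: "e = (u, v)" by (cases e)
    show ?thesis using that g0 gr gc unfolding e by (cases u; cases v) (auto simp: netE_simps intro: sum_nonneg)
  qed
  have p3: "(\<Sum>u\<in>netV C X x. ?f (u, v)) = (\<Sum>w\<in>netV C X x. ?f (v, w))" if "v \<in> netV C X x - {Src, Snk}" for v
  proof -
    have "(\<exists>r\<in>rankings C. v = RkV r) \<or> (\<exists>y\<in>X-{x}. v = CdV y)" using that unfolding netV_def by auto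
    then show ?thesis
    proof
      assume "\<exists>r\<in>rankings C. v = RkV r"
      then obtain r where "r \<in> rankings C" "v = RkV r" by auto
      then show ?thesis unfolding sum_netV[OF C X] by simp
    next
      assume "\<exists>y\<in>X-{x}. v = CdV y"
      then obtain y where "y \<in> X-{x}" "v = CdV y" by auto
      then show ?thesis unfolding sum_netV[OF C X] by simp
    qed
  qed
  show "is_flow (netV C X x) (netE C X x) (netCap b) Src Snk ?f"
    unfolding is_flow_def using p1 p2 p3 by blast
  show "flow_value (netV C X x) Src ?f = bval (rankings C) (X - {x}) g"
    unfolding flow_value_def sum_netV[OF C X] bval_def by simp
qed

lemma choose2_real: "2 * real (n choose 2) = real n * (real n - 1)"
proof (induction n)
  case 0 then show ?case by simp
next
  case (Suc n)
  have "Suc n choose 2 = n + (n choose 2)"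
    by (simp add: numeral_2_eq_2)
  then show ?case using Suc by (simp add: algebra_simps)
qed

lemma arith_round:
  fixes n k :: nat and B W :: real
  assumes "1 \<le> k" "k + 1 \<le> n" "real n * (real n - 1) \<le> 2 * B" "2 * B < real n * (real n - 1) + 2"
    "(real k + 1) * B \<le> 2 * real n * W"
  shows "real k \<le> W \<or> real k - 1 + B - real n * (real n - 1) / 2 < W"
proof -
  consider "n = 2" | "n = 3" | "n = 4" | "n \<ge> 5" using assms(1,2) by linarith
  then show ?thesis
  proof cases
    case 1
    then have "k = 1" using assms by simp
    then show ?thesis using assms 1 by simp
  next
    case 2
    then have "k = 1 \<or> k = 2" using assms by auto
    then show ?thesis using assms 2 by auto
  next
    case 3
    then have "k = 1 \<or> k = 2 \<or> k = 3" using assms by auto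
    then show ?thesis using assms 3 by auto
  next
    case 4
    have "(real k + 1) * (real n * (real n - 1)) \<le> (real k + 1) * (2 * B)"
      using assms(3) by (intro mult_left_mono) auto
    also have "\<dots> = 2 * ((real k + 1) * B)" by (simp add: algebra_simps)
    also have "\<dots> \<le> 2 * (2 * real n * W)" using assms(5) by linarith
    finally have "real n * ((real k + 1) * (real n - 1)) \<le> real n * (4 * W)" by (simp add: algebra_simps)
    then have a: "(real k + 1) * (real n - 1) \<le> 4 * W" using 4 by (simp add: mult_le_cancel_left)
    have "(real k + 1) * 4 \<le> (real k + 1) * (real n - 1)" using 4 by (intro mult_left_mono) auto
    then show ?thesis using a by simp
  qed
qed

lemma round_lemma:
  assumes C: "finite C" and XC: "X \<subseteq> C" and x: "x \<in> X"
    and bnn: "\<forall>r\<in>rankings C. 0 \<le> b r"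
    and bmax: "\<forall>y\<in>X. Util C b y X \<le> Util C b x X"
    and mf: "is_max_flow (netV C X x) (netE C X x) (netCap b) Src Snk f"
    and i1: "2 * real (card X choose 2) \<le> 2 * (\<Sum>r\<in>rankings C. b r)"
    and i2: "2 * (\<Sum>r\<in>rankings C. b r) < 2 * real (card X choose 2) + 2"
  shows "flow_value (netV C X x) Src f \<le> real (card X) - 1"
    and "real (card X) - 2 + (\<Sum>r\<in>rankings C. b r) - real (card X choose 2) < flow_value (netV C X x) Src f"
proof -
  define Rk where "Rk = rankings C"
  define Y where "Y = X - {x}"
  define E where "E = (\<lambda>r y. prefers r x y)"
  define g where "g = (\<lambda>r y. f (RkV r, CdV y))"
  define F where "F = flow_value (netV C X x) Src f"
  define B where "B = (\<Sum>r\<in>rankings C. b r)"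
  define n where "n = card X"
  have finX: "finite X" using C XC finite_subset by auto
  have finY: "finite Y" unfolding Y_def using finX by auto
  have finRk: "finite Rk" unfolding Rk_def using finite_rankings[OF C] .
  have n1: "n \<ge> 1" unfolding n_def using x finX by (metis One_nat_def Suc_leI card_gt_0_iff empty_iff)
  have cY: "card Y = n - 1" unfolding Y_def n_def using x finX by simp
  have fl: "is_flow (netV C X x) (netE C X x) (netCap b) Src Snk f" using mf unfolding is_max_flow_def by blast
  note ff = flow_facts[OF C finX fl]
  have feasg: "feas Rk Y E b g" unfolding feas_def Rk_def Y_def E_def g_def
    using ff by auto
  have Fv: "F = bval Rk Y g" unfolding F_def bval_def Rk_def Y_def g_def using ff(2,4) by simp
  have mx: "\<forall>g'. feas Rk Y E b g' \<longrightarrow> bval Rk Y g' \<le> bval Rk Y g"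
  proof (intro allI impI)
    fix g' assume fg': "feas Rk Y E b g'"
    have "is_flow (netV C X x) (netE C X x) (netCap b) Src Snk (mkflow (rankings C) (X - {x}) g')"
      "flow_value (netV C X x) Src (mkflow (rankings C) (X - {x}) g') = bval (rankings C) (X - {x}) g'"
      using mkflow_is_flow[OF C finX, of x b g'] fg' unfolding Rk_def Y_def E_def by auto
    then show "bval Rk Y g' \<le> bval Rk Y g" using mf unfolding is_max_flow_def Rk_def Y_def
      by (metis F_def Fv Rk_def Y_def)
  qed
  have Fub: "F \<le> real n - 1"
  proof -
    have "F = (\<Sum>y\<in>Y. \<Sum>r\<in>Rk. g r y)" unfolding Fv bval_def by (rule sum.swap)
    also have "\<dots> \<le> (\<Sum>y\<in>Y. 1)" by (rule sum_mono) (use feasg in \<open>auto simp: feas_def\<close>)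
    also have "\<dots> = real n - 1" using cY n1 by simp
    finally show ?thesis .
  qed
  obtain S where SY: "S \<subseteq> Y" and cut: "real (card S) + (\<Sum>r\<in>{r\<in>Rk. \<exists>y\<in>Y-S. E r y}. b r) \<le> F"
    using cut_bound[OF finRk finY feasg mx] Fv by auto
  define W where "W = (\<Sum>r\<in>{r\<in>Rk. \<exists>y\<in>Y-S. E r y}. b r)"
  define k where "k = card (Y - S)"
  have cS: "card S = n - 1 - k" unfolding k_def using cY SY finY
    by (metis card_Diff_subset card_mono diff_diff_cancel finite_subset)
  have kn: "k \<le> n - 1" unfolding k_def using cY finY by (metis card_mono Diff_subset)
  have W0: "0 \<le> W" unfolding W_def using bnn Rk_def by (auto intro: sum_nonneg)
  have goal2: "real n - 2 + B - real (n choose 2) < F"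
  proof (cases "Y - S = {}")
    case True
    have "k = 0" unfolding k_def True by simp
    then have "real n - 1 \<le> F" using cut cS W0 n1 unfolding W_def by simp
    then show ?thesis using i2 unfolding B_def n_def by linarith
  next
    case False
    have kpos: "1 \<le> k" unfolding k_def using False finY by (simp add: Suc_leI card_gt_0_iff)
    have bb: "(real (card (Y - S)) + 1) * (\<Sum>r\<in>rankings C. b r)
        \<le> 2 * real (card X) * (\<Sum>r\<in>{r\<in>rankings C. \<exists>y\<in>Y - S. prefers r x y}. b r)"
      by (rule borda_bound[OF C XC x _ False bnn bmax]) (use SY in \<open>auto simp: Y_def\<close>)
    have bb': "(real k + 1) * B \<le> 2 * real n * W"
      using bb unfolding k_def B_def n_def W_def Rk_def E_def .
    have ch: "2 * real (n choose 2) = real n * (real n - 1)" by (rule choose2_real)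
    have ar: "real k \<le> W \<or> real k - 1 + B - real n * (real n - 1) / 2 < W"
      by (rule arith_round[OF kpos _ _ _ bb']) (use kn n1 i1 i2 ch in \<open>auto simp: B_def n_def\<close>)
    have Fl: "real n - 1 - real k + W \<le> F" using cut cS kn n1 unfolding W_def by (simp add: of_nat_diff)
    show ?thesis using ar Fl ch i2 Fub unfolding B_def n_def by auto
  qed
  show "flow_value (netV C X x) Src f \<le> real (card X) - 1" using Fub unfolding F_def n_def .
  show "real (card X) - 2 + (\<Sum>r\<in>rankings C. b r) - real (card X choose 2) < flow_value (netV C X x) Src f"
    using goal2 unfolding F_def n_def B_def .
qed

lemma pairs_of_mem: "p \<in> pairs_of xs \<Longrightarrow> \<exists>i j. i < j \<and> j < length xs \<and> p = (xs ! i, xs ! j)"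
  unfolding pairs_of_def prefers_def by auto

lemma pairs_sum:
  assumes d: "distinct xs"
  shows "(\<Sum>p\<in>pairs_of xs. \<phi> p) = (\<Sum>i<length xs. \<Sum>j\<in>{i<..<length xs}. \<phi> (xs ! i, xs ! j))"
proof -
  define I where "I = (SIGMA i:{..<length xs}. {i<..<length xs})"
  have eq: "pairs_of xs = (\<lambda>(i, j). (xs ! i, xs ! j)) ` I"
    unfolding pairs_of_def prefers_def I_def by (auto simp: image_iff; blast)
  have inj: "inj_on (\<lambda>(i, j). (xs ! i, xs ! j)) I"
    unfolding I_def inj_on_def using d by (auto simp: nth_eq_iff_index_eq)
  have "(\<Sum>p\<in>pairs_of xs. \<phi> p) = (\<Sum>(i, j)\<in>I. \<phi> (xs ! i, xs ! j))"
    unfolding eq by (subst sum.reindex[OF inj]) (simp add: case_prod_unfold)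
  also have "\<dots> = (\<Sum>i<length xs. \<Sum>j\<in>{i<..<length xs}. \<phi> (xs ! i, xs ! j))"
    unfolding I_def by (rule sum.Sigma[symmetric]) auto
  finally show ?thesis .
qed

theorem mainTheorem11:
  fixes C :: "'a set" and R :: "'a list \<Rightarrow> real" and xs :: "'a list"
  assumes "finite C"
    and "is_profile C R"
    and "FA_Borda C R xs"
  shows "pair_priceable C R xs"
proof -
  note fC = assms(1)
  obtain b where run: "FA_Borda_run C R xs b" using assms(3) unfolding FA_Borda_def by blast
  define m where "m = card C"
  define Rk where "Rk = rankings C"
  define X where "X i = C - set (take i xs)" for i
  have len: "length xs = m" using run unfolding FA_Borda_run_def m_def by blast
  have b0: "b 0 = (\<lambda>r. R r * real (m choose 2))" using run unfolding FA_Borda_run_def m_def by blast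
  have rd: "\<forall>i<m. xs ! i \<in> X i \<and> (\<forall>y\<in>X i. Util C (b i) y (X i) \<le> Util C (b i) (xs ! i) (X i)) \<and>
      (\<exists>f. is_max_flow (netV C (X i) (xs ! i)) (netE C (X i) (xs ! i)) (netCap (b i)) Src Snk f \<and>
           (\<forall>r. b (Suc i) r = b i r - f (Src, RkV r)))"
    using run unfolding FA_Borda_run_def m_def X_def Let_def by blast
  have "\<forall>i. \<exists>f. i < m \<longrightarrow> is_max_flow (netV C (X i) (xs ! i)) (netE C (X i) (xs ! i)) (netCap (b i)) Src Snk f \<and>
           (\<forall>r. b (Suc i) r = b i r - f (Src, RkV r))" using rd by blast
  from choice[OF this] obtain F where Fp: "\<And>i. i < m \<Longrightarrow> is_max_flow (netV C (X i) (xs ! i)) (netE C (X i) (xs ! i)) (netCap (b i)) Src Snk (F i) \<and>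
           (\<forall>r. b (Suc i) r = b i r - F i (Src, RkV r))" by blast
  have xin: "\<And>i. i < m \<Longrightarrow> xs ! i \<in> X i" using rd by blast
  have dist: "distinct xs"
    unfolding distinct_conv_nth
  proof (intro allI impI)
    fix i j assume ij: "i < length xs" "j < length xs" "i \<noteq> j"
    have key: "xs ! a \<noteq> xs ! c" if "a < c" "c < m" for a c
    proof -
      have "xs ! a \<in> set (take c xs)" using that len by (auto simp: in_set_conv_nth intro!: exI[of _ a])
      moreover have "xs ! c \<notin> set (take c xs)" using xin[OF that(2)] unfolding X_def by auto
      ultimately show ?thesis by auto
    qed
    show "xs ! i \<noteq> xs ! j"
      using ij len key[of i j] key[of j i] by (cases "i < j") auto
  qed
  have setxs: "set xs = C"
  proof -
    have "set xs \<subseteq> C" using xin len unfolding X_def by (auto simp: in_set_conv_nth)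
    moreover have "card (set xs) = card C" using dist len distinct_card m_def by metis
    ultimately show ?thesis using fC card_subset_eq by blast
  qed
  have Xdrop: "X i = set (drop i xs)" for i
  proof -
    have "set xs = set (take i xs) \<union> set (drop i xs)" by (metis append_take_drop_id set_append)
    moreover have "set (take i xs) \<inter> set (drop i xs) = {}"
      using dist by (metis append_take_drop_id distinct_append)
    ultimately show ?thesis unfolding X_def using setxs by auto
  qed
  have cardX: "card (X i) = m - i" for i unfolding Xdrop using dist len
    by (simp add: distinct_card)
  have XC: "X i \<subseteq> C" for i unfolding X_def by auto
  have Xdiff: "X i - {xs ! i} = (\<lambda>j. xs ! j) ` {i<..<m}" if "i < m" for i
  proof
    show "X i - {xs ! i} \<subseteq> (\<lambda>j. xs ! j) ` {i<..<m}"
    proof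
      fix y assume y: "y \<in> X i - {xs ! i}"
      then have "y \<in> set (drop i xs)" unfolding Xdrop by auto
      then obtain j where j: "j < length (drop i xs)" "drop i xs ! j = y" by (auto simp: in_set_conv_nth)
      then have "y = xs ! (i + j)" "i + j < m" using len that by auto
      moreover have "i + j \<noteq> i" using y calculation(1) by (metis Diff_iff insertI1)
      ultimately show "y \<in> (\<lambda>j. xs ! j) ` {i<..<m}" by (intro image_eqI[of _ _ "i + j"]) auto
    qed
    show "(\<lambda>j. xs ! j) ` {i<..<m} \<subseteq> X i - {xs ! i}"
    proof
      fix y assume "y \<in> (\<lambda>j. xs ! j) ` {i<..<m}"
      then obtain j where j: "i < j" "j < m" "y = xs ! j" by auto
      have "y \<in> set (drop i xs)" using j len
        by (auto simp: in_set_conv_nth intro!: exI[of _ "j - i"])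
      moreover have "y \<noteq> xs ! i" using j dist len by (simp add: nth_eq_iff_index_eq)
      ultimately show "y \<in> X i - {xs ! i}" unfolding Xdrop by auto
    qed
  qed
  have fX: "finite (X i)" for i using fC XC finite_subset by blast
  have fRk: "finite Rk" unfolding Rk_def using finite_rankings[OF fC] .
  have mf: "is_max_flow (netV C (X i) (xs ! i)) (netE C (X i) (xs ! i)) (netCap (b i)) Src Snk (F i)"
    and bs: "\<And>r. b (Suc i) r = b i r - F i (Src, RkV r)" if "i < m" for i using Fp[OF that] by auto
  have fl: "is_flow (netV C (X i) (xs ! i)) (netE C (X i) (xs ! i)) (netCap (b i)) Src Snk (F i)"
    if "i < m" for i using mf[OF that] unfolding is_max_flow_def by blast
  have Rprof: "\<forall>r\<in>Rk. 0 \<le> R r" "(\<Sum>r\<in>Rk. R r) = 1" using assms(2) unfolding is_profile_def Rk_def by auto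
  have inv: "(\<forall>r\<in>Rk. 0 \<le> b i r) \<and> 2 * real ((m - i) choose 2) \<le> 2 * (\<Sum>r\<in>Rk. b i r)
      \<and> 2 * (\<Sum>r\<in>Rk. b i r) < 2 * real ((m - i) choose 2) + 2" if "i \<le> m" for i
    using that
  proof (induction i)
    case 0
    have "(\<Sum>r\<in>Rk. b 0 r) = real (m choose 2)" unfolding b0 using Rprof by (simp add: sum_distrib_right[symmetric])
    then show ?case using Rprof unfolding b0 by simp
  next
    case (Suc i)
    then have im: "i < m" by simp
    note IH = Suc.IH[OF less_imp_le[OF im]]
    note ff = flow_facts[OF fC fX fl[OF im]]
    have rl: "flow_value (netV C (X i) (xs ! i)) Src (F i) \<le> real (card (X i)) - 1"
        "real (card (X i)) - 2 + (\<Sum>r\<in>rankings C. b i r) - real (card (X i) choose 2) < flow_value (netV C (X i) (xs ! i)) Src (F i)"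
      using round_lemma[OF fC XC xin[OF im] _ _ mf[OF im]] IH rd im unfolding cardX Rk_def by auto
    have Bs: "(\<Sum>r\<in>Rk. b (Suc i) r) = (\<Sum>r\<in>Rk. b i r) - flow_value (netV C (X i) (xs ! i)) Src (F i)"
      unfolding ff(4) bs[OF im] Rk_def by (simp add: sum_subtractf)
    have nn: "\<forall>r\<in>Rk. 0 \<le> b (Suc i) r" using ff(1) unfolding bs[OF im] Rk_def by auto
    have c1: "2 * real ((m - i) choose 2) = real (m - i) * (real (m - i) - 1)" by (rule choose2_real)
    have c2: "2 * real ((m - Suc i) choose 2) = real (m - Suc i) * (real (m - Suc i) - 1)" by (rule choose2_real)
    have mi: "real (m - Suc i) = real (m - i) - 1" using im by (simp add: of_nat_diff)
    have c3: "2 * real ((m - Suc i) choose 2) = 2 * real ((m - i) choose 2) - 2 * (real (m - i) - 1)"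
      unfolding c1 c2 mi by (simp add: algebra_simps)
    show ?case using nn Bs c3 rl IH unfolding cardX Rk_def by auto
  qed
  define \<pi> where "\<pi> r p = (\<Sum>i<m. if xs ! i = fst p then F i (RkV r, CdV (snd p)) else 0)" for r p
  have pi_eq: "\<pi> r (xs ! i, v) = F i (RkV r, CdV v)" if "i < m" for i r v
  proof -
    have "\<pi> r (xs ! i, v) = (\<Sum>j<m. if j = i then F j (RkV r, CdV v) else 0)"
      unfolding \<pi>_def by (rule sum.cong) (use that dist len in \<open>auto simp: nth_eq_iff_index_eq\<close>)
    then show ?thesis using that by simp
  qed
  have pairs: "\<exists>i j. i < j \<and> j < m \<and> p = (xs ! i, xs ! j)" if "p \<in> pairs_of xs" for p
    using pairs_of_mem[OF that] len by simp
  have yin: "xs ! j \<in> X i - {xs ! i}" if "i < j" "j < m" for i j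
    using Xdiff[of i] that by auto
  have le1: "F i (RkV r, CdV y) \<le> 1" and ge0: "0 \<le> F i (RkV r, CdV y)"
    if "i < m" "y \<in> X i - {xs ! i}" "r \<in> Rk" for i y r
  proof -
    note ff = flow_facts[OF fC fX fl[OF that(1)]]
    show "0 \<le> F i (RkV r, CdV y)" using ff(5) by blast
    have "F i (RkV r, CdV y) \<le> (\<Sum>r'\<in>Rk. F i (RkV r', CdV y))"
      by (rule member_le_sum) (use that fRk ff(5) in auto)
    also have "\<dots> \<le> 1" using ff(3) that(2) unfolding Rk_def by auto
    finally show "F i (RkV r, CdV y) \<le> 1" .
  qed
  have colsum: "(\<Sum>r\<in>Rk. F i (RkV r, CdV y)) \<le> 1" if "i < m" "y \<in> X i - {xs ! i}" for i y
    using flow_facts(3)[OF fC fX fl[OF that(1)]] that(2) unfolding Rk_def by auto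
  have rowsum: "(\<Sum>p\<in>pairs_of xs. \<pi> r p) = b 0 r - b m r" if r: "r \<in> Rk" for r
  proof -
    have "(\<Sum>p\<in>pairs_of xs. \<pi> r p) = (\<Sum>i<m. \<Sum>j\<in>{i<..<m}. \<pi> r (xs ! i, xs ! j))"
      using pairs_sum[OF dist] len by simp
    also have "\<dots> = (\<Sum>i<m. b i r - b (Suc i) r)"
    proof (rule sum.cong)
      fix i assume "i \<in> {..<m}"
      then have im: "i < m" by simp
      note ff = flow_facts[OF fC fX fl[OF im]]
      have "(\<Sum>j\<in>{i<..<m}. \<pi> r (xs ! i, xs ! j)) = (\<Sum>j\<in>{i<..<m}. F i (RkV r, CdV (xs ! j)))"
        using pi_eq im by simp
      also have "\<dots> = (\<Sum>y\<in>X i - {xs ! i}. F i (RkV r, CdV y))"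
        unfolding Xdiff[OF im]
        by (rule sum.reindex[symmetric, unfolded comp_def]) (use dist len in \<open>auto simp: inj_on_def nth_eq_iff_index_eq\<close>)
      also have "\<dots> = F i (Src, RkV r)" using ff(2) r unfolding Rk_def by auto
      also have "\<dots> = b i r - b (Suc i) r" using bs[OF im] by simp
      finally show "(\<Sum>j\<in>{i<..<m}. \<pi> r (xs ! i, xs ! j)) = b i r - b (Suc i) r" .
    qed simp
    also have "\<dots> = b 0 r - b m r" by (rule sum_lessThan_telescope')
    finally show ?thesis .
  qed
  note invm = inv[of m, simplified]
  show ?thesis
    unfolding pair_priceable_def
  proof (intro exI[of _ \<pi>] conjI)
    show "\<forall>r\<in>rankings C. \<forall>p\<in>pairs_of xs. 0 \<le> \<pi> r p \<and> \<pi> r p \<le> 1"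
    proof (intro ballI)
      fix r p assume r: "r \<in> rankings C" and p: "p \<in> pairs_of xs"
      obtain i j where ij: "i < j" "j < m" "p = (xs ! i, xs ! j)" using pairs[OF p] by blast
      have im: "i < m" using ij by simp
      show "0 \<le> \<pi> r p \<and> \<pi> r p \<le> 1" unfolding ij(3) pi_eq[OF im]
        using le1[OF im yin[OF ij(1,2)]] ge0[OF im yin[OF ij(1,2)]] r unfolding Rk_def by auto
    qed
  next
    show "\<forall>r\<in>rankings C. \<forall>(x, y)\<in>pairs_of xs. \<pi> r (x, y) \<le> real (util r x {x, y})"
    proof (intro ballI, clarify)
      fix r u v assume r: "r \<in> rankings C" and p: "(u, v) \<in> pairs_of xs"
      obtain i j where ij: "i < j" "j < m" "(u, v) = (xs ! i, xs ! j)" using pairs[OF p] by blast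
      have im: "i < m" using ij by simp
      have uv: "u = xs ! i" "v = xs ! j" using ij by auto
      have uneq: "u \<noteq> v" using uv ij dist len by (simp add: nth_eq_iff_index_eq)
      show "\<pi> r (u, v) \<le> real (util r u {u, v})"
      proof (cases "F i (RkV r, CdV v) = 0")
        case True then show ?thesis unfolding uv(1) pi_eq[OF im] using uv by simp
      next
        case False
        then have "prefers r (xs ! i) v" using flow_facts(6)[OF fC fX fl[OF im]] by blast
        then have "{z \<in> {u, v} - {u}. prefers r u z} = {v}" using uneq uv by auto
        then have "util r u {u, v} = 1" unfolding util_def by simp
        then show ?thesis unfolding uv(1) pi_eq[OF im] using le1[OF im, of v r] yin[OF ij(1,2)] uv r
          unfolding Rk_def by simp
      qed
    qed
  next
    show "\<forall>r\<in>rankings C. (\<Sum>p\<in>pairs_of xs. \<pi> r p) \<le> real (card C choose 2) * R r"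
    proof
      fix r assume r: "r \<in> rankings C"
      show "(\<Sum>p\<in>pairs_of xs. \<pi> r p) \<le> real (card C choose 2) * R r"
        using rowsum[of r] invm r unfolding b0 Rk_def m_def by (auto simp: algebra_simps)
    qed
  next
    show "\<forall>p\<in>pairs_of xs. (\<Sum>r\<in>rankings C. \<pi> r p) \<le> 1"
    proof
      fix p assume p: "p \<in> pairs_of xs"
      obtain i j where ij: "i < j" "j < m" "p = (xs ! i, xs ! j)" using pairs[OF p] by blast
      have im: "i < m" using ij by simp
      show "(\<Sum>r\<in>rankings C. \<pi> r p) \<le> 1" unfolding ij(3) pi_eq[OF im]
        using colsum[OF im yin[OF ij(1,2)]] unfolding Rk_def .
    qed
  next
    have "(\<Sum>r\<in>rankings C. \<Sum>p\<in>pairs_of xs. \<pi> r p) = (\<Sum>r\<in>Rk. b 0 r) - (\<Sum>r\<in>Rk. b m r)"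
      using rowsum unfolding Rk_def by (simp add: sum_subtractf)
    also have "(\<Sum>r\<in>Rk. b 0 r) = real (m choose 2)" unfolding b0 using Rprof by (simp add: sum_distrib_right[symmetric])
    finally show "real (card C choose 2) - 1 < (\<Sum>r\<in>rankings C. \<Sum>p\<in>pairs_of xs. \<pi> r p)"
      using invm unfolding m_def by (simp add: numeral_2_eq_2)
  qed
qed

end
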